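(* Let $T \in \mathbb{R}^n \otimes \mathbb{R}^n \otimes \mathbb{R}^n$ be a real tensor with complex subrank $Q_{\mathbb{C}}(T) = n$. Then $Q(T) \geq n/2$.
   Context: For $r \geq 0$ let $I_r := \sum_{j=1}^r e_j \otimes e_j \otimes e_j$. The (real) subrank of $T \in \mathbb{R}^{n_1} \otimes \mathbb{R}^{n_2} \otimes \mathbb{R}^{n_3}$ is $Q(T) := \max\{ r \mid \exists\ \mathbb{R}\text{-linear } \varphi_i : \mathbb{R}^{n_i} \to \mathbb{R}^r,\ (\varphi_1 \otimes \varphi_2 \otimes \varphi_3) T = I_r\}$. The complex subrank $Q_{\mathbb{C}}(T)$ is defined the same way but allowing $\mathbb{C}$-linear maps $\varphi_i : \mathbb{C}^{n_i} \to \mathbb{C}^r$. *)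

theory Defs
  imports Complex_Main
begin

text \<open>A tensor in K^n1 (x) K^n2 (x) K^n3 is represented by its coordinate function
  T i j k (only indices i < n1, j < n2, k < n3 are relevant).
  A K-linear map K^m \<rightarrow> K^r is represented by its r x m matrix A a i
  (a < r, i < m).\<close>

definition restricts_to_unit :: "nat \<Rightarrow> nat \<Rightarrow> nat \<Rightarrow> (nat \<Rightarrow> nat \<Rightarrow> nat \<Rightarrow> 'a::field) \<Rightarrow> nat \<Rightarrow> bool" where
  "restricts_to_unit n1 n2 n3 T r \<longleftrightarrow>
     (\<exists>A B C :: nat \<Rightarrow> nat \<Rightarrow> 'a.
        \<forall>a<r. \<forall>b<r. \<forall>c<r.
          (\<Sum>i<n1. \<Sum>j<n2. \<Sum>k<n3. A a i * B b j * C c k * T i j k)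
            = (if a = b \<and> b = c then 1 else 0))"

definition subrank :: "nat \<Rightarrow> nat \<Rightarrow> nat \<Rightarrow> (nat \<Rightarrow> nat \<Rightarrow> nat \<Rightarrow> 'a::field) \<Rightarrow> nat" where
  "subrank n1 n2 n3 T = Max {r. restricts_to_unit n1 n2 n3 T r}"

definition real_subrank :: "nat \<Rightarrow> nat \<Rightarrow> nat \<Rightarrow> (nat \<Rightarrow> nat \<Rightarrow> nat \<Rightarrow> real) \<Rightarrow> nat" where
  "real_subrank n1 n2 n3 T = subrank n1 n2 n3 T"

definition complex_subrank :: "nat \<Rightarrow> nat \<Rightarrow> nat \<Rightarrow> (nat \<Rightarrow> nat \<Rightarrow> nat \<Rightarrow> real) \<Rightarrow> nat" where
  "complex_subrank n1 n2 n3 T = subrank n1 n2 n3 (\<lambda>i j k. complex_of_real (T i j k))"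

end

theory Submission
  imports Defs "Jordan_Normal_Form.Determinant"
begin

lemma sq_inv:
  fixes F H :: "nat \<Rightarrow> nat \<Rightarrow> 'a::field"
  assumes h: "\<forall>a<m. \<forall>b<m. (\<Sum>i<m. F a i * H i b) = (if a = b then 1 else 0)"
  shows "\<forall>a<m. \<forall>b<m. (\<Sum>i<m. H a i * F i b) = (if a = b then 1 else 0)"
proof -
  define MF where "MF = mat m m (\<lambda>(a,i). F a i)"
  define MH where "MH = mat m m (\<lambda>(a,i). H a i)"
  have c1: "MF \<in> carrier_mat m m" "MH \<in> carrier_mat m m" by (auto simp: MF_def MH_def)
  have "MF * MH = 1\<^sub>m m"
    by (rule eq_matI) (use h in \<open>auto simp: MF_def MH_def scalar_prod_def row_def col_def lessThan_atLeast0\<close>)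
  from mat_mult_left_right_inverse[OF c1 this] have e: "MH * MF = 1\<^sub>m m" .
  show ?thesis
  proof (intro allI impI)
    fix a b assume ab: "a < m" "b < m"
    have "(MH * MF) $$ (a,b) = (1\<^sub>m m :: 'a mat) $$ (a,b)" using e by simp
    thus "(\<Sum>i<m. H a i * F i b) = (if a = b then 1 else 0)"
      using ab by (simp add: MF_def MH_def scalar_prod_def row_def col_def lessThan_atLeast0)
  qed
qed

lemma triple_factor:
  fixes A B C :: "nat \<Rightarrow> 'a::field"
  shows "(\<Sum>i<n. \<Sum>j<n. \<Sum>k<n. A i * B j * C k * T i j k) =
         (\<Sum>i<n. A i * (\<Sum>j<n. \<Sum>k<n. B j * C k * T i j k))"
  by (simp add: sum_distrib_left mult.assoc)

lemma rtu_bound: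
  fixes T :: "nat \<Rightarrow> nat \<Rightarrow> nat \<Rightarrow> 'a::field"
  assumes "restricts_to_unit n n n T r"
  shows "r \<le> n"
proof (rule ccontr)
  assume "\<not> r \<le> n"
  hence rn: "n < r" by simp
  from assms obtain A B C :: "nat \<Rightarrow> nat \<Rightarrow> 'a" where
    h: "\<forall>a<r. \<forall>b<r. \<forall>c<r. (\<Sum>i<n. \<Sum>j<n. \<Sum>k<n. A a i * B b j * C c k * T i j k)
            = (if a = b \<and> b = c then 1 else 0)"
    unfolding restricts_to_unit_def by blast
  define F where "F a i = (if i < n then A a i else 0)" for a i
  define H where "H i b = (if i < n then (\<Sum>j<n. \<Sum>k<n. B b j * C b k * T i j k) else 0)" for i b
  have "\<forall>a<r. \<forall>b<r. (\<Sum>i<r. F a i * H i b) = (if a = b then 1 else 0)"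
  proof (intro allI impI)
    fix a b assume ab: "a < r" "b < r"
    have "(\<Sum>i<r. F a i * H i b) = (\<Sum>i<n. F a i * H i b)"
      by (rule sum.mono_neutral_right) (use rn in \<open>auto simp: F_def H_def\<close>)
    also have "\<dots> = (\<Sum>i<n. A a i * (\<Sum>j<n. \<Sum>k<n. B b j * C b k * T i j k))"
      by (simp add: F_def H_def)
    also have "\<dots> = (\<Sum>i<n. \<Sum>j<n. \<Sum>k<n. A a i * B b j * C b k * T i j k)"
      by (simp add: triple_factor)
    also have "\<dots> = (if a = b then 1 else 0)" using h ab by simp
    finally show "(\<Sum>i<r. F a i * H i b) = (if a = b then 1 else 0)" .
  qed
  from sq_inv[OF this] rn have "(\<Sum>i<r. H n i * F i n) = 1" by auto
  moreover have "(\<Sum>i<r. H n i * F i n) = 0" by (simp add: F_def)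
  ultimately show False by simp
qed

lemma rtu_zero: "restricts_to_unit n1 n2 n3 T 0"
  unfolding restricts_to_unit_def by auto

lemma rtu_finite:
  fixes T :: "nat \<Rightarrow> nat \<Rightarrow> nat \<Rightarrow> 'a::field"
  shows "finite {r. restricts_to_unit n n n T r}"
  by (rule finite_subset[of _ "{..n}"]) (auto dest: rtu_bound)

lemma subrank_ge:
  fixes T :: "nat \<Rightarrow> nat \<Rightarrow> nat \<Rightarrow> 'a::field"
  assumes "restricts_to_unit n n n T r"
  shows "r \<le> subrank n n n T"
  unfolding subrank_def using rtu_finite assms by (intro Max_ge) auto

lemma subrank_in:
  fixes T :: "nat \<Rightarrow> nat \<Rightarrow> nat \<Rightarrow> 'a::field"
  shows "restricts_to_unit n n n T (subrank n n n T)"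
proof -
  have "subrank n n n T \<in> {r. restricts_to_unit n n n T r}"
    unfolding subrank_def using rtu_zero[of n n n T] by (intro Max_in rtu_finite) auto
  thus ?thesis by simp
qed


definition Phi :: "nat \<Rightarrow> (nat \<Rightarrow> nat \<Rightarrow> nat \<Rightarrow> complex) \<Rightarrow> (nat \<Rightarrow> complex) \<Rightarrow> (nat \<Rightarrow> complex) \<Rightarrow> (nat \<Rightarrow> complex) \<Rightarrow> complex" where
  "Phi n X u v w = (\<Sum>i<n. \<Sum>j<n. \<Sum>k<n. u i * v j * w k * X i j k)"

lemma Phi_cong:
  assumes "\<forall>i<n. u i = u' i" "\<forall>i<n. v i = v' i" "\<forall>i<n. w i = w' i"
  shows "Phi n X u v w = Phi n X u' v' w'"
  unfolding Phi_def using assms by simp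

lemma Phi_lin1: "Phi n X (\<lambda>i. \<Sum>a<m. f a * U a i) v w = (\<Sum>a<m. f a * Phi n X (U a) v w)"
  unfolding Phi_def
  by (simp add: sum_distrib_left sum_distrib_right mult.assoc sum.swap[of _ "{..<m}"])

lemma Phi_lin2: "Phi n X u (\<lambda>i. \<Sum>a<m. f a * U a i) w = (\<Sum>a<m. f a * Phi n X u (U a) w)"
  unfolding Phi_def
  by (simp add: sum_distrib_left sum_distrib_right mult.assoc mult.left_commute sum.swap[of _ "{..<m}"])

lemma Phi_lin3: "Phi n X u v (\<lambda>i. \<Sum>a<m. f a * U a i) = (\<Sum>a<m. f a * Phi n X u v (U a))"
  unfolding Phi_def
  by (simp add: sum_distrib_left sum_distrib_right mult.assoc mult.left_commute sum.swap[of _ "{..<m}"])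

lemma swap_lem:
  fixes u :: "nat \<Rightarrow> 'a::comm_semiring_1"
  shows "(\<Sum>a<n. (\<Sum>i<m. u i * X i a) * U a j) = (\<Sum>i<m. u i * (\<Sum>a<n. X i a * U a j))"
  unfolding sum_distrib_right sum_distrib_left
  by (subst sum.swap) (simp add: mult.assoc)

lemma swap3:
  fixes U V W U' V' :: "nat \<Rightarrow> nat \<Rightarrow> complex"
  shows "(\<Sum>x<n. \<Sum>y<n. U' p x * V' q y * (\<Sum>a<n. U x a * V y a * W z a)) =
     (\<Sum>a<n. (\<Sum>x<n. U' p x * U x a) * (\<Sum>y<n. V' q y * V y a) * W z a)"
proof -
  have "(\<Sum>x<n. \<Sum>y<n. U' p x * V' q y * (\<Sum>a<n. U x a * V y a * W z a)) =
        (\<Sum>x<n. \<Sum>y<n. \<Sum>a<n. U' p x * V' q y * (U x a * V y a * W z a))"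
    by (simp add: sum_distrib_left)
  also have "\<dots> = (\<Sum>x<n. \<Sum>a<n. \<Sum>y<n. U' p x * V' q y * (U x a * V y a * W z a))"
    by (rule sum.cong[OF refl], rule sum.swap)
  also have "\<dots> = (\<Sum>a<n. \<Sum>x<n. \<Sum>y<n. U' p x * V' q y * (U x a * V y a * W z a))"
    by (rule sum.swap)
  also have "\<dots> = (\<Sum>a<n. (\<Sum>x<n. U' p x * U x a) * (\<Sum>y<n. V' q y * V y a) * W z a)"
    unfolding sum_product sum_distrib_right by (intro sum.cong refl) (simp add: mult_ac sum_distrib_left)
  finally show ?thesis .
qed

lemma delta2:
  assumes "(z::nat) < n"
  shows "(\<Sum>x<n. \<Sum>y<n. if x = y \<and> y = z then c else 0) = (c::'a::comm_monoid_add)"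
proof -
  have "(\<Sum>y<n. if x = y \<and> y = z then c else 0) = (if x = z then c else 0)" for x
    using assms by (cases "x = z") (simp_all add: sum.delta' cong: conj_cong)
  thus ?thesis using assms by (simp add: sum.delta')
qed

definition L :: "nat \<Rightarrow> (nat \<Rightarrow> nat \<Rightarrow> complex) \<Rightarrow> (nat \<Rightarrow> complex) \<Rightarrow> nat \<Rightarrow> complex" where
  "L n X u a = (\<Sum>i<n. u i * X i a)"

lemma L_lin: "L n X (\<lambda>i. \<Sum>a<m. f a * U a i) b = (\<Sum>a<m. f a * L n X (U a) b)"
  unfolding L_def
  by (simp add: sum_distrib_left sum_distrib_right mult.assoc sum.swap[of _ "{..<m}"])

lemma L_cong: "\<forall>i<n. u i = u' i \<Longrightarrow> L n X u b = L n X u' b"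
  unfolding L_def by simp

lemma span:
  assumes h: "\<forall>a<n. \<forall>b<n. (\<Sum>i<n. U a i * X i b) = (if a = b then 1 else 0)"
    and i: "i < n"
  shows "u i = (\<Sum>a<n. L n X u a * U a i)"
proof -
  have h2: "\<forall>a<n. \<forall>b<n. (\<Sum>i<n. X a i * U i b) = (if a = b then 1 else 0)"
    using sq_inv[OF h] .
  have "(\<Sum>a<n. L n X u a * U a i) = (\<Sum>i'<n. u i' * (\<Sum>a<n. X i' a * U a i))"
    unfolding L_def by (rule swap_lem)
  also have "\<dots> = (\<Sum>i'<n. u i' * (if i' = i then 1 else 0))"
    using h2 i by (intro sum.cong) auto
  also have "\<dots> = u i" using i by (simp add: if_distrib cong: if_cong)
  finally show ?thesis by simp
qed

definition G :: "nat \<Rightarrow> (nat \<Rightarrow> nat \<Rightarrow> complex) \<Rightarrow> (nat \<Rightarrow> nat \<Rightarrow> complex) \<Rightarrow> nat \<Rightarrow> nat \<Rightarrow> complex" where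
  "G n U X x a = L n X (\<lambda>i. cnj (U x i)) a"

lemma G_inv:
  assumes h: "\<forall>a<n. \<forall>b<n. (\<Sum>i<n. U a i * X i b) = (if a = b then 1 else 0)"
    and xy: "x < n" "y < n"
  shows "(\<Sum>a<n. cnj (G n U X x a) * G n U X a y) = (if x = y then 1 else 0)"
proof -
  have sp: "U x i = (\<Sum>a<n. cnj (G n U X x a) * cnj (U a i))" if "i < n" for i
  proof -
    have "cnj (U x i) = (\<Sum>a<n. G n U X x a * U a i)"
      unfolding G_def using span[OF h that, of "\<lambda>i. cnj (U x i)"] .
    hence "cnj (cnj (U x i)) = cnj (\<Sum>a<n. G n U X x a * U a i)" by simp
    thus ?thesis by simp
  qed
  have "(if x = y then 1 else 0) = L n X (U x) y" using h xy unfolding L_def by simp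
  also have "\<dots> = L n X (\<lambda>i. \<Sum>a<n. cnj (G n U X x a) * cnj (U a i)) y"
    using sp by (intro L_cong) auto
  also have "\<dots> = (\<Sum>a<n. cnj (G n U X x a) * G n U X a y)"
    unfolding L_lin G_def ..
  finally show ?thesis by simp
qed

lemma monomial:
  fixes U V W U' V' :: "nat \<Rightarrow> nat \<Rightarrow> complex"
  assumes h: "\<forall>x<n. \<forall>y<n. \<forall>z<n. (\<Sum>a<n. U x a * V y a * W z a) = (if x = y \<and> y = z then 1 else 0)"
    and hU: "\<forall>x<n. \<forall>a<n. (\<Sum>y<n. U' x y * U y a) = (if x = a then 1 else 0)"
    and hV: "\<forall>x<n. \<forall>a<n. (\<Sum>y<n. V' x y * V y a) = (if x = a then 1 else 0)"
    and z: "z < n" and ab: "a < n" "b < n" "a \<noteq> b"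
  shows "W z a = 0 \<or> W z b = 0"
proof -
  have key: "U' p z * V' q z = (if p = q then W z p else 0)" if pq: "p < n" "q < n" for p q
  proof -
    have "U' p z * V' q z = (\<Sum>x<n. \<Sum>y<n. U' p x * V' q y * (if x = y \<and> y = z then 1 else 0))"
      using z by (simp add: if_distrib delta2 cong: if_cong)
    also have "\<dots> = (\<Sum>x<n. \<Sum>y<n. U' p x * V' q y * (\<Sum>a<n. U x a * V y a * W z a))"
      using h z by (intro sum.cong refl) auto
    also have "\<dots> = (\<Sum>a<n. (\<Sum>x<n. U' p x * U x a) * (\<Sum>y<n. V' q y * V y a) * W z a)"
      by (rule swap3)
    also have "\<dots> = (\<Sum>a<n. (if p = a then 1 else 0) * (if q = a then 1 else 0) * W z a)"
      using hU hV pq by (intro sum.cong refl) auto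
    also have "\<dots> = (\<Sum>a<n. if a = p then (if p = q then W z a else 0) else 0)"
      by (intro sum.cong refl) auto
    also have "\<dots> = (if p = q then W z p else 0)" using pq by (simp add: sum.delta')
    finally show ?thesis .
  qed
  show ?thesis
  proof (rule ccontr)
    assume "\<not> ?thesis"
    hence "W z a \<noteq> 0" "W z b \<noteq> 0" by auto
    with key[of a a] key[of b b] ab have "U' a z \<noteq> 0" "V' b z \<noteq> 0" by auto
    with key[of a b] ab show False by auto
  qed
qed



lemma sum_single:
  assumes "(a::nat) < n" "\<forall>b<n. b \<noteq> a \<longrightarrow> f b = 0"
  shows "(\<Sum>b<n. f b) = (f a :: 'a::comm_monoid_add)"
proof -
  have "(\<Sum>b<n. f b) = (\<Sum>b<n. if b = a then f a else 0)"
    using assms by (intro sum.cong) auto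
  thus ?thesis using assms by (simp add: sum.delta')
qed

lemma Phi_alt2: "Phi n X u v w = (\<Sum>j<n. v j * (\<Sum>i<n. \<Sum>k<n. u i * w k * X i j k))"
  unfolding Phi_def sum_distrib_left
  by (subst sum.swap) (simp add: mult_ac)

lemma Phi_alt3: "Phi n X u v w = (\<Sum>k<n. w k * (\<Sum>i<n. \<Sum>j<n. u i * v j * X i j k))"
proof -
  have "Phi n X u v w = (\<Sum>i<n. \<Sum>k<n. \<Sum>j<n. u i * v j * w k * X i j k)"
    unfolding Phi_def by (rule sum.cong[OF refl], rule sum.swap)
  also have "\<dots> = (\<Sum>k<n. \<Sum>i<n. \<Sum>j<n. u i * v j * w k * X i j k)"
    by (rule sum.swap)
  finally show ?thesis by (simp add: sum_distrib_left mult_ac)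
qed

lemma Phi_alt1: "Phi n X u v w = (\<Sum>i<n. u i * (\<Sum>j<n. \<Sum>k<n. v j * w k * X i j k))"
  unfolding Phi_def by (simp add: sum_distrib_left mult_ac)

lemma Phi_cnj: "(\<forall>i j k. cnj (X i j k) = X i j k) \<Longrightarrow>
   cnj (Phi n X u v w) = Phi n X (\<lambda>i. cnj (u i)) (\<lambda>i. cnj (v i)) (\<lambda>i. cnj (w i))"
  unfolding Phi_def by simp

lemma collapse:
  assumes "(a::nat) < n"
  shows "(\<Sum>b<n. f b * (\<Sum>c<n. g c * (if a = b \<and> b = c then 1 else 0))) = f a * (g a :: complex)"
proof -
  have "(\<Sum>c<n. g c * (if a = b \<and> b = c then 1 else 0)) = (if b = a then g a else 0)" if "b < n" for b
  proof -
    have "(\<Sum>c<n. g c * (if a = b \<and> b = c then 1 else 0)) = (\<Sum>c<n. if c = a then (if b = a then g a else 0) else 0)"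
      by (intro sum.cong) auto
    thus ?thesis using assms by (simp add: sum.delta')
  qed
  hence "(\<Sum>b<n. f b * (\<Sum>c<n. g c * (if a = b \<and> b = c then 1 else 0))) = (\<Sum>b<n. if b = a then f a * g a else 0)"
    by (intro sum.cong) auto
  thus ?thesis using assms by (simp add: sum.delta')
qed

locale cx =
  fixes n :: nat and T :: "nat \<Rightarrow> nat \<Rightarrow> nat \<Rightarrow> real" and A B C :: "nat \<Rightarrow> nat \<Rightarrow> complex"
  assumes h: "\<forall>a<n. \<forall>b<n. \<forall>c<n. (\<Sum>i<n. \<Sum>j<n. \<Sum>k<n. A a i * B b j * C c k * complex_of_real (T i j k))
            = (if a = b \<and> b = c then 1 else 0)"
begin

definition "Tc i j k = complex_of_real (T i j k)"
definition "XA i a = (\<Sum>j<n. \<Sum>k<n. B a j * C a k * Tc i j k)"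
definition "XB j b = (\<Sum>i<n. \<Sum>k<n. A b i * C b k * Tc i j k)"
definition "XC k c = (\<Sum>i<n. \<Sum>j<n. A c i * B c j * Tc i j k)"

lemma hP: "a < n \<Longrightarrow> b < n \<Longrightarrow> c < n \<Longrightarrow> Phi n Tc (A a) (B b) (C c) = (if a = b \<and> b = c then 1 else 0)"
  using h unfolding Phi_def Tc_def by simp

lemma hA: "\<forall>a<n. \<forall>b<n. (\<Sum>i<n. A a i * XA i b) = (if a = b then 1 else 0)"
  using hP unfolding XA_def by (auto simp: Phi_alt1)
lemma hB: "\<forall>a<n. \<forall>b<n. (\<Sum>i<n. B a i * XB i b) = (if a = b then 1 else 0)"
  using hP unfolding XB_def by (auto simp: Phi_alt2)
lemma hC: "\<forall>a<n. \<forall>b<n. (\<Sum>i<n. C a i * XC i b) = (if a = b then 1 else 0)"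
  using hP unfolding XC_def by (auto simp: Phi_alt3)

lemma K: "Phi n Tc u v w = (\<Sum>a<n. L n XA u a * L n XB v a * L n XC w a)"
proof -
  have "Phi n Tc u v w = Phi n Tc (\<lambda>i. \<Sum>a<n. L n XA u a * A a i) (\<lambda>i. \<Sum>a<n. L n XB v a * B a i)
          (\<lambda>i. \<Sum>a<n. L n XC w a * C a i)"
    by (intro Phi_cong allI impI span[OF hA] span[OF hB] span[OF hC])
  also have "\<dots> = (\<Sum>a<n. L n XA u a * (\<Sum>b<n. L n XB v b * (\<Sum>c<n. L n XC w c *
       Phi n Tc (A a) (B b) (C c))))"
    unfolding Phi_lin1 Phi_lin2 Phi_lin3 ..
  also have "\<dots> = (\<Sum>a<n. L n XA u a * (\<Sum>b<n. L n XB v b * (\<Sum>c<n. L n XC w c *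
       (if a = b \<and> b = c then 1 else 0))))"
    using hP by (intro sum.cong refl arg_cong2[where f="(*)"]) auto
  also have "\<dots> = (\<Sum>a<n. L n XA u a * (L n XB v a * L n XC w a))"
    by (intro sum.cong refl arg_cong2[where f="(*)"] collapse) auto
  finally show ?thesis by (simp add: mult_ac)
qed

definition "GA = G n A XA"
definition "GB = G n B XB"
definition "GC = G n C XC"

lemma S: "x < n \<Longrightarrow> y < n \<Longrightarrow> z < n \<Longrightarrow>
  (\<Sum>a<n. GA x a * GB y a * GC z a) = (if x = y \<and> y = z then 1 else 0)"
proof -
  assume xyz: "x < n" "y < n" "z < n"
  have "(\<Sum>a<n. GA x a * GB y a * GC z a) =
     Phi n Tc (\<lambda>i. cnj (A x i)) (\<lambda>i. cnj (B y i)) (\<lambda>i. cnj (C z i))"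
    unfolding K GA_def GB_def GC_def G_def ..
  also have "\<dots> = cnj (Phi n Tc (A x) (B y) (C z))"
    by (rule Phi_cnj[symmetric]) (simp add: Tc_def)
  also have "\<dots> = (if x = y \<and> y = z then 1 else 0)" using hP xyz by simp
  finally show ?thesis .
qed

lemma IA: "\<forall>x<n. \<forall>a<n. (\<Sum>y<n. cnj (GA x y) * GA y a) = (if x = a then 1 else 0)"
  unfolding GA_def using G_inv[OF hA] by auto
lemma IB: "\<forall>x<n. \<forall>a<n. (\<Sum>y<n. cnj (GB x y) * GB y a) = (if x = a then 1 else 0)"
  unfolding GB_def using G_inv[OF hB] by auto
lemma IC: "\<forall>x<n. \<forall>a<n. (\<Sum>y<n. cnj (GC x y) * GC y a) = (if x = a then 1 else 0)"
  unfolding GC_def using G_inv[OF hC] by auto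

lemma monoC: "z < n \<Longrightarrow> a < n \<Longrightarrow> b < n \<Longrightarrow> a \<noteq> b \<Longrightarrow> GC z a = 0 \<or> GC z b = 0"
  by (rule monomial[OF _ IA IB]) (use S in auto)
lemma monoA: "z < n \<Longrightarrow> a < n \<Longrightarrow> b < n \<Longrightarrow> a \<noteq> b \<Longrightarrow> GA z a = 0 \<or> GA z b = 0"
proof (rule monomial[OF _ IB IC])
  show "\<forall>x<n. \<forall>y<n. \<forall>z<n. (\<Sum>a<n. GB x a * GC y a * GA z a) = (if x = y \<and> y = z then 1 else 0)"
  proof (intro allI impI)
    fix x y z assume "x < n" "y < n" "z < n"
    from S[OF this(3,1,2)] show "(\<Sum>a<n. GB x a * GC y a * GA z a) = (if x = y \<and> y = z then 1 else 0)"
      by (simp add: mult_ac)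
  qed
qed
lemma monoB: "z < n \<Longrightarrow> a < n \<Longrightarrow> b < n \<Longrightarrow> a \<noteq> b \<Longrightarrow> GB z a = 0 \<or> GB z b = 0"
proof (rule monomial[OF _ IC IA])
  show "\<forall>x<n. \<forall>y<n. \<forall>z<n. (\<Sum>a<n. GC x a * GA y a * GB z a) = (if x = y \<and> y = z then 1 else 0)"
  proof (intro allI impI)
    fix x y z assume "x < n" "y < n" "z < n"
    from S[OF this(2,3,1)] show "(\<Sum>a<n. GC x a * GA y a * GB z a) = (if x = y \<and> y = z then 1 else 0)"
      by (simp add: mult_ac)
  qed
qed

end


lemma sum_two:
  assumes "(a::nat) < n" "b < n" "a \<noteq> b" "\<forall>c<n. c \<noteq> a \<and> c \<noteq> b \<longrightarrow> f c = 0"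
  shows "(\<Sum>c<n. f c) = f a + (f b :: 'a::comm_monoid_add)"
proof -
  have "(\<Sum>c<n. f c) = (\<Sum>c\<in>{a,b}. f c)"
    using assms by (intro sum.mono_neutral_right) auto
  thus ?thesis using assms by simp
qed

context cx begin

definition "prm x = (SOME a. a < n \<and> GA x a \<noteq> 0 \<and> GB x a \<noteq> 0 \<and> GC x a \<noteq> 0)"

lemma pi_ex: "x < n \<Longrightarrow> \<exists>a. a < n \<and> GA x a \<noteq> 0 \<and> GB x a \<noteq> 0 \<and> GC x a \<noteq> 0"
proof (rule ccontr)
  assume x: "x < n" and "\<not> (\<exists>a. a < n \<and> GA x a \<noteq> 0 \<and> GB x a \<noteq> 0 \<and> GC x a \<noteq> 0)"
  hence "(\<Sum>a<n. GA x a * GB x a * GC x a) = 0" by (intro sum.neutral) auto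
  with S[OF x x x] show False by simp
qed

lemma pi_prop: "x < n \<Longrightarrow> prm x < n \<and> GA x (prm x) \<noteq> 0 \<and> GB x (prm x) \<noteq> 0 \<and> GC x (prm x) \<noteq> 0"
proof -
  assume "x < n"
  from someI_ex[OF pi_ex[OF this]] show ?thesis unfolding prm_def .
qed

lemma GA0: "x < n \<Longrightarrow> b < n \<Longrightarrow> b \<noteq> prm x \<Longrightarrow> GA x b = 0"
  using monoA[of x b "prm x"] pi_prop[of x] by auto
lemma GB0: "x < n \<Longrightarrow> b < n \<Longrightarrow> b \<noteq> prm x \<Longrightarrow> GB x b = 0"
  using monoB[of x b "prm x"] pi_prop[of x] by auto
lemma GC0: "x < n \<Longrightarrow> b < n \<Longrightarrow> b \<noteq> prm x \<Longrightarrow> GC x b = 0"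
  using monoC[of x b "prm x"] pi_prop[of x] by auto

lemma g_prod: "x < n \<Longrightarrow> GA x (prm x) * GB x (prm x) * GC x (prm x) = 1"
proof -
  assume x: "x < n"
  have "(\<Sum>a<n. GA x a * GB x a * GC x a) = GA x (prm x) * GB x (prm x) * GC x (prm x)"
    by (rule sum_single) (use x pi_prop GA0 in auto)
  with S[OF x x x] show ?thesis by simp
qed

lemma pi_inv: "x < n \<Longrightarrow> prm (prm x) = x"
proof -
  assume x: "x < n"
  have p: "prm x < n" using pi_prop x by auto
  have "(\<Sum>y<n. cnj (GA x y) * GA y x) = cnj (GA x (prm x)) * GA (prm x) x"
    by (rule sum_single) (use x p GA0 in auto)
  with IA x have "cnj (GA x (prm x)) * GA (prm x) x = 1" by auto
  hence "GA (prm x) x \<noteq> 0" by auto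
  with GA0[OF p x] show ?thesis by metis
qed

definition "Sr = {x. x < n \<and> x \<le> prm x}"

lemma Sr_finite: "finite Sr" unfolding Sr_def by auto

lemma Sr_card: "n \<le> 2 * card Sr"
proof -
  have "{..<n} \<subseteq> Sr \<union> prm ` Sr"
  proof
    fix x assume "x \<in> {..<n}"
    hence x: "x < n" by simp
    show "x \<in> Sr \<union> prm ` Sr"
    proof (cases "x \<le> prm x")
      case True thus ?thesis using x Sr_def by auto
    next
      case False
      hence "prm x \<in> Sr" using x pi_inv pi_prop unfolding Sr_def by auto
      moreover have "x = prm (prm x)" using pi_inv x by simp
      ultimately show ?thesis by blast
    qed
  qed
  hence "n \<le> card (Sr \<union> prm ` Sr)"
    using Sr_finite by (metis card_lessThan card_mono finite_UnI finite_imageI)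
  also have "\<dots> \<le> card Sr + card (prm ` Sr)" by (rule card_Un_le)
  also have "\<dots> \<le> 2 * card Sr" using card_image_le[OF Sr_finite, of prm] by simp
  finally show ?thesis .
qed

lemma orbit_disj:
  assumes "x \<in> Sr" "y \<in> Sr" "a = x \<or> a = prm x" "a = y \<or> a = prm y"
  shows "x = y"
  using assms pi_inv unfolding Sr_def by (metis le_antisym mem_Collect_eq)

end


lemma of_real_Re: "complex_of_real (Re z) = z / 2 + cnj z / 2"
  using complex_add_cnj[of z] by (simp add: field_simps)

lemma L_lin2: "L n X (\<lambda>i. p * u i + q * v i) a = p * L n X u a + q * L n X v a"
  unfolding L_def by (simp add: sum.distrib sum_distrib_left algebra_simps)

context cx begin

definition "cA x = (if prm x = x \<and> 1 + GA x (prm x) = 0 then \<i> else 1)"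
definition "cB x = (if prm x = x \<and> 1 + GB x (prm x) = 0 then \<i> else 1)"
definition "cC x = (if prm x = x \<and> 1 + GC x (prm x) = 0 then \<i> else 1)"

definition "RA x i = Re (cA x * A x i)"
definition "RB x i = Re (cB x * B x i)"
definition "RC x i = Re (cC x * C x i)"

definition "R x y z = (\<Sum>i<n. \<Sum>j<n. \<Sum>k<n. RA x i * RB y j * RC z k * T i j k)"

definition "pA x a = L n XA (\<lambda>i. complex_of_real (RA x i)) a"
definition "pB x a = L n XB (\<lambda>i. complex_of_real (RB x i)) a"
definition "pC x a = L n XC (\<lambda>i. complex_of_real (RC x i)) a"

lemma pA_eq: "x < n \<Longrightarrow> a < n \<Longrightarrow> pA x a = cA x / 2 * (if x = a then 1 else 0) + cnj (cA x) / 2 * GA x a"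
proof -
  assume xa: "x < n" "a < n"
  have "pA x a = L n XA (\<lambda>i. cA x / 2 * A x i + cnj (cA x) / 2 * cnj (A x i)) a"
    unfolding pA_def RA_def of_real_Re by (rule L_cong) (simp add: field_simps)
  also have "\<dots> = cA x / 2 * L n XA (A x) a + cnj (cA x) / 2 * GA x a"
    unfolding L_lin2 GA_def G_def ..
  also have "L n XA (A x) a = (if x = a then 1 else 0)" using hA xa unfolding L_def by auto
  finally show ?thesis .
qed
lemma pB_eq: "x < n \<Longrightarrow> a < n \<Longrightarrow> pB x a = cB x / 2 * (if x = a then 1 else 0) + cnj (cB x) / 2 * GB x a"
proof -
  assume xa: "x < n" "a < n"
  have "pB x a = L n XB (\<lambda>i. cB x / 2 * B x i + cnj (cB x) / 2 * cnj (B x i)) a"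
    unfolding pB_def RB_def of_real_Re by (rule L_cong) (simp add: field_simps)
  also have "\<dots> = cB x / 2 * L n XB (B x) a + cnj (cB x) / 2 * GB x a"
    unfolding L_lin2 GB_def G_def ..
  also have "L n XB (B x) a = (if x = a then 1 else 0)" using hB xa unfolding L_def by auto
  finally show ?thesis .
qed
lemma pC_eq: "x < n \<Longrightarrow> a < n \<Longrightarrow> pC x a = cC x / 2 * (if x = a then 1 else 0) + cnj (cC x) / 2 * GC x a"
proof -
  assume xa: "x < n" "a < n"
  have "pC x a = L n XC (\<lambda>i. cC x / 2 * C x i + cnj (cC x) / 2 * cnj (C x i)) a"
    unfolding pC_def RC_def of_real_Re by (rule L_cong) (simp add: field_simps)
  also have "\<dots> = cC x / 2 * L n XC (C x) a + cnj (cC x) / 2 * GC x a"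
    unfolding L_lin2 GC_def G_def ..
  also have "L n XC (C x) a = (if x = a then 1 else 0)" using hC xa unfolding L_def by auto
  finally show ?thesis .
qed

lemma R_eq: "complex_of_real (R x y z) = (\<Sum>a<n. pA x a * pB y a * pC z a)"
proof -
  have "complex_of_real (R x y z) = Phi n Tc (\<lambda>i. complex_of_real (RA x i))
      (\<lambda>i. complex_of_real (RB y i)) (\<lambda>i. complex_of_real (RC z i))"
    unfolding R_def Phi_def Tc_def by simp
  also have "\<dots> = (\<Sum>a<n. pA x a * pB y a * pC z a)" unfolding K pA_def pB_def pC_def ..
  finally show ?thesis .
qed

lemma supA: "x < n \<Longrightarrow> a < n \<Longrightarrow> pA x a \<noteq> 0 \<Longrightarrow> a = x \<or> a = prm x"
  using pA_eq[of x a] GA0[of x a] by (cases "a = x") auto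
lemma supB: "x < n \<Longrightarrow> a < n \<Longrightarrow> pB x a \<noteq> 0 \<Longrightarrow> a = x \<or> a = prm x"
  using pB_eq[of x a] GB0[of x a] by (cases "a = x") auto
lemma supC: "x < n \<Longrightarrow> a < n \<Longrightarrow> pC x a \<noteq> 0 \<Longrightarrow> a = x \<or> a = prm x"
  using pC_eq[of x a] GC0[of x a] by (cases "a = x") auto

lemma R_off:
  assumes "x \<in> Sr" "y \<in> Sr" "z \<in> Sr" "\<not> (x = y \<and> y = z)"
  shows "R x y z = 0"
proof -
  have n: "x < n" "y < n" "z < n" using assms Sr_def by auto
  have "(\<Sum>a<n. pA x a * pB y a * pC z a) = 0"
  proof (intro sum.neutral ballI)
    fix a assume "a \<in> {..<n}"
    hence a: "a < n" by simp
    show "pA x a * pB y a * pC z a = 0"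
    proof (rule ccontr)
      assume "pA x a * pB y a * pC z a \<noteq> 0"
      hence "pA x a \<noteq> 0" "pB y a \<noteq> 0" "pC z a \<noteq> 0" by auto
      with supA supB supC n a have o: "a = x \<or> a = prm x" "a = y \<or> a = prm y" "a = z \<or> a = prm z"
        by auto
      from orbit_disj[OF assms(1,2) o(1,2)] orbit_disj[OF assms(2,3) o(2,3)] assms(4)
      show False by simp
    qed
  qed
  with R_eq[of x y z] show ?thesis by simp
qed


lemma R_diag:
  assumes "x \<in> Sr"
  shows "R x x x \<noteq> 0"
proof -
  have x: "x < n" using assms Sr_def by auto
  have p: "prm x < n" using pi_prop x by auto
  have gp: "GA x (prm x) * GB x (prm x) * GC x (prm x) = 1" using g_prod x by simp
  have "(\<Sum>a<n. pA x a * pB x a * pC x a) \<noteq> 0"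
  proof (cases "prm x = x")
    case True
    have "(\<Sum>a<n. pA x a * pB x a * pC x a) = pA x x * pB x x * pC x x"
      by (rule sum_single) (use x supA True in auto)
    moreover have "pA x x \<noteq> 0"
    proof (cases "1 + GA x x = 0")
      case True
      hence "GA x x = -1" by (simp add: add_eq_0_iff)
      thus ?thesis using pA_eq[OF x x] \<open>prm x = x\<close> by (simp add: cA_def)
    next
      case False
      thus ?thesis using pA_eq[OF x x] \<open>prm x = x\<close> by (auto simp: cA_def add_divide_distrib[symmetric])
    qed
    moreover have "pB x x \<noteq> 0"
    proof (cases "1 + GB x x = 0")
      case True
      hence "GB x x = -1" by (simp add: add_eq_0_iff)
      thus ?thesis using pB_eq[OF x x] \<open>prm x = x\<close> by (simp add: cB_def)
    next
      case False
      thus ?thesis using pB_eq[OF x x] \<open>prm x = x\<close> by (auto simp: cB_def add_divide_distrib[symmetric])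
    qed
    moreover have "pC x x \<noteq> 0"
    proof (cases "1 + GC x x = 0")
      case True
      hence "GC x x = -1" by (simp add: add_eq_0_iff)
      thus ?thesis using pC_eq[OF x x] \<open>prm x = x\<close> by (simp add: cC_def)
    next
      case False
      thus ?thesis using pC_eq[OF x x] \<open>prm x = x\<close> by (auto simp: cC_def add_divide_distrib[symmetric])
    qed
    ultimately show ?thesis by simp
  next
    case False
    have "(\<Sum>a<n. pA x a * pB x a * pC x a) = pA x x * pB x x * pC x x + pA x (prm x) * pB x (prm x) * pC x (prm x)"
      by (rule sum_two) (use x p False supA in auto)
    moreover have "pA x x = 1/2" "pB x x = 1/2" "pC x x = 1/2"
      using pA_eq[OF x x] pB_eq[OF x x] pC_eq[OF x x] GA0[OF x x] GB0[OF x x] GC0[OF x x] False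
      by (auto simp: cA_def cB_def cC_def)
    moreover have "pA x (prm x) = GA x (prm x) / 2" "pB x (prm x) = GB x (prm x) / 2"
        "pC x (prm x) = GC x (prm x) / 2"
      using pA_eq[OF x p] pB_eq[OF x p] pC_eq[OF x p] False
      by (auto simp: cA_def cB_def cC_def)
    ultimately have "(\<Sum>a<n. pA x a * pB x a * pC x a) = 1/8 + (GA x (prm x) * GB x (prm x) * GC x (prm x)) / 8"
      by (simp add: field_simps)
    thus ?thesis using gp by auto
  qed
  with R_eq[of x x x] show ?thesis by auto
qed


lemma exists_real:
  "\<exists>r. restricts_to_unit n n n T r \<and> n \<le> 2 * r"
proof -
  obtain e where e: "bij_betw e {0..<card Sr} Sr" using ex_bij_betw_nat_finite[OF Sr_finite] by blast
  define r where "r = card Sr"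
  have eS: "t < r \<Longrightarrow> e t \<in> Sr" for t using e unfolding r_def bij_betw_def by auto
  have einj: "t < r \<Longrightarrow> u < r \<Longrightarrow> e t = e u \<Longrightarrow> t = u" for t u
    using e unfolding r_def bij_betw_def inj_on_def by auto
  define A' where "A' t i = RA (e t) i / R (e t) (e t) (e t)" for t i
  define B' where "B' t j = RB (e t) j" for t j
  define C' where "C' t k = RC (e t) k" for t k
  have "\<forall>a<r. \<forall>b<r. \<forall>c<r. (\<Sum>i<n. \<Sum>j<n. \<Sum>k<n. A' a i * B' b j * C' c k * T i j k)
            = (if a = b \<and> b = c then 1 else 0)"
  proof (intro allI impI)
    fix a b c assume abc: "a < r" "b < r" "c < r"
    have "(\<Sum>i<n. \<Sum>j<n. \<Sum>k<n. A' a i * B' b j * C' c k * T i j k)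
        = R (e a) (e b) (e c) / R (e a) (e a) (e a)"
      unfolding A'_def B'_def C'_def R_def by (simp add: sum_divide_distrib)
    also have "\<dots> = (if a = b \<and> b = c then 1 else 0)"
    proof (cases "a = b \<and> b = c")
      case True
      thus ?thesis using R_diag[OF eS[OF abc(1)]] by simp
    next
      case False
      hence "\<not> (e a = e b \<and> e b = e c)" using einj abc by blast
      thus ?thesis using R_off[OF eS[OF abc(1)] eS[OF abc(2)] eS[OF abc(3)]] False by simp
    qed
    finally show "(\<Sum>i<n. \<Sum>j<n. \<Sum>k<n. A' a i * B' b j * C' c k * T i j k)
            = (if a = b \<and> b = c then 1 else 0)" .
  qed
  hence "restricts_to_unit n n n T r" unfolding restricts_to_unit_def by blast
  moreover have "n \<le> 2 * r" using Sr_card r_def by simp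
  ultimately show ?thesis by blast
qed

end

theorem proposition2p3:
  fixes T :: "nat \<Rightarrow> nat \<Rightarrow> nat \<Rightarrow> real" and n :: nat
  assumes "complex_subrank n n n T = n"
  shows "real (real_subrank n n n T) \<ge> real n / 2"
proof -
  have "restricts_to_unit n n n (\<lambda>i j k. complex_of_real (T i j k)) n"
    using subrank_in[of n "\<lambda>i j k. complex_of_real (T i j k)"] assms
    unfolding complex_subrank_def by simp
  then obtain A B C :: "nat \<Rightarrow> nat \<Rightarrow> complex" where
    h: "\<forall>a<n. \<forall>b<n. \<forall>c<n. (\<Sum>i<n. \<Sum>j<n. \<Sum>k<n. A a i * B b j * C c k * complex_of_real (T i j k))
            = (if a = b \<and> b = c then 1 else 0)"
    unfolding restricts_to_unit_def by blast
  interpret cx n T A B C by unfold_locales (rule h)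
  obtain r where r: "restricts_to_unit n n n T r" "n \<le> 2 * r" using exists_real by blast
  have "r \<le> real_subrank n n n T" unfolding real_subrank_def using subrank_ge[OF r(1)] .
  with r(2) show ?thesis by simp
qed

end
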